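(* Let $\alpha>0$ and, for $u_0:\mathbb{R}\to\mathbb{R}$, let $u^*(x)=\sup_{t>0,\ |y-x|\leq\alpha t}P(\cdot,t)*|u_0|(y)$ with $P(x,t)=\frac{1}{\pi}\frac{t}{x^2+t^2}$. (i) If $u_0\in C(\mathbb{R})\cap L^p(\mathbb{R})$ for some $1\leq p<\infty$, then $u^*\in C(\mathbb{R})$. (ii) If $u_0$ is bounded and Lipschitz continuous, then $u^*$ is bounded and Lipschitz continuous with $\mathrm{Lip}(u^* )\leq\mathrm{Lip}(u_0)$.
   Context: $\mathrm{Lip}(u)=\sup_{x\neq y}|u(x)-u(y)|/|x-y|$. *)

theory Defs
  imports "HOL-Analysis.Analysis"
begin

definition poisson_kernel :: "real \<Rightarrow> real \<Rightarrow> real" where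
  "poisson_kernel x t = (1 / pi) * (t / (x\<^sup>2 + t\<^sup>2))"

text \<open>(P(.,t) * |u0|)(y) = integral of P(y - z, t) |u0 z| dz; nonnegative, so taken in ennreal.\<close>
definition poisson_conv_abs :: "(real \<Rightarrow> real) \<Rightarrow> real \<Rightarrow> real \<Rightarrow> ennreal" where
  "poisson_conv_abs u0 t y = (\<integral>\<^sup>+ z. ennreal (poisson_kernel (y - z) t * \<bar>u0 z\<bar>) \<partial>lborel)"

definition nontang_max :: "real \<Rightarrow> (real \<Rightarrow> real) \<Rightarrow> real \<Rightarrow> ennreal" where
  "nontang_max \<alpha> u0 x = (SUP (t, y) \<in> {(t, y). t > 0 \<and> \<bar>y - x\<bar> \<le> \<alpha> * t}. poisson_conv_abs u0 t y)"

definition Lip :: "(real \<Rightarrow> real) \<Rightarrow> real" where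
  "Lip u = Sup {\<bar>u x - u y\<bar> / \<bar>x - y\<bar> | x y. x \<noteq> y}"

end

theory Submission
  imports Defs "HOL-Probability.Sinc_Integral"
begin

lemma inv_sq_nn: "(\<integral>\<^sup>+x. ennreal (inverse (1+x^2)) \<partial>lborel) = ennreal pi"
proof -
  have i: "integrable lborel (\<lambda>x::real. inverse (1+x^2))"
    using integrable_inverse_1_plus_square by (simp add: set_integrable_def einterval_eq_UNIV)
  have v: "integral\<^sup>L lborel (\<lambda>x::real. inverse (1+x^2)) = pi"
    using LBINT_inverse_1_plus_square
    by (simp add: interval_lebesgue_integral_def set_lebesgue_integral_def einterval_eq_UNIV)
  show ?thesis
    by (subst nn_integral_eq_integral[OF i]) (auto simp: v add_pos_nonneg)
qed

lemma P_nonneg: "t \<ge> 0 \<Longrightarrow> 0 \<le> poisson_kernel x t"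
  by (simp add: poisson_kernel_def)

lemma P_meas[measurable]: "(\<lambda>z. poisson_kernel (y - z) t) \<in> borel_measurable borel"
  unfolding poisson_kernel_def by measurable

lemma P_int: assumes t: "t > 0" shows "(\<integral>\<^sup>+z. ennreal (poisson_kernel (y - z) t) \<partial>lborel) = 1"
proof -
  have "(\<integral>\<^sup>+z. ennreal (poisson_kernel (y - z) t) \<partial>lborel)
      = \<bar>t\<bar> * (\<integral>\<^sup>+x. ennreal (poisson_kernel (y - (y + t * x)) t) \<partial>lborel)"
    by (rule nn_integral_real_affine) (use t in auto)
  also have "(\<lambda>x. ennreal (poisson_kernel (y - (y + t * x)) t)) = (\<lambda>x. ennreal (1/(pi*t)) * ennreal (inverse (1+x^2)))"
  proof
    fix x
    have "poisson_kernel (y - (y + t * x)) t = 1/(pi*t) * inverse (1+x^2)"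
    proof -
      have e: "(y - (y + t * x))\<^sup>2 + t\<^sup>2 = t * (t * (1 + x^2))" by (simp add: power2_eq_square algebra_simps)
      have "t / (t * (t * (1 + x^2))) = 1 / (t * (1 + x^2))" using t by (simp add: add_pos_nonneg)
      then show ?thesis unfolding poisson_kernel_def e by (simp add: field_simps)
    qed
    then show "ennreal (poisson_kernel (y - (y + t * x)) t) = ennreal (1/(pi*t)) * ennreal (inverse (1+x^2))"
      using t by (simp add: ennreal_mult[symmetric] add_pos_nonneg)
  qed
  also have "(\<integral>\<^sup>+x. ennreal (1/(pi*t)) * ennreal (inverse (1+x^2)) \<partial>lborel) = ennreal (1/(pi*t)) * ennreal pi"
    by (subst nn_integral_cmult) (auto simp: inv_sq_nn)
  also have "\<bar>t\<bar> * (ennreal (1/(pi*t)) * ennreal pi) = 1"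
    using t by (simp add: ennreal_mult[symmetric] ennreal_mult'[symmetric] field_simps)
  finally show ?thesis .
qed

lemma shift_int:
  fixes F :: "real \<Rightarrow> ennreal"
  assumes [measurable]: "F \<in> borel_measurable borel"
  shows "(\<integral>\<^sup>+z. F z \<partial>lborel) = (\<integral>\<^sup>+z. F (z + h) \<partial>lborel)"
  using nn_integral_real_affine[of F 1 h] by (simp add: add.commute)

lemma conv_shift:
  assumes [measurable]: "u0 \<in> borel_measurable borel"
  shows "poisson_conv_abs u0 t (y + h) = (\<integral>\<^sup>+z. ennreal (poisson_kernel (y - z) t * \<bar>u0 (z + h)\<bar>) \<partial>lborel)"
  unfolding poisson_conv_abs_def
  by (subst shift_int[where h=h]) (auto simp: algebra_simps)

lemma P_far:
  assumes t: "t > 0" and T: "T > 0" and a: "\<alpha> \<ge> 0" and y: "\<bar>y - x0\<bar> \<le> \<alpha> * t"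
    and z: "\<not> \<bar>z - x0\<bar> \<le> (\<alpha> + 1) * T"
  shows "poisson_kernel (y - z) t \<le> 1 / (pi * T)"
proof -
  have key: "t * T \<le> (y - z)\<^sup>2 + t\<^sup>2"
  proof (cases "t \<ge> T")
    case True
    then have "t * T \<le> t * t" using t by (intro mult_left_mono) auto
    moreover have "0 \<le> (y - z) * (y - z)" by simp
    ultimately show ?thesis unfolding power2_eq_square by linarith
  next
    case False
    have "\<bar>y - z\<bar> > T"
    proof -
      have "\<alpha> * t \<le> \<alpha> * T" using False a by (intro mult_left_mono) auto
      then show ?thesis using y z by (auto simp: algebra_simps abs_if split: if_splits)
    qed
    then have "T * T \<le> \<bar>y - z\<bar> * \<bar>y - z\<bar>" using T by (intro mult_mono) auto
    moreover have "t * T \<le> T * T" using False T by (intro mult_right_mono) auto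
    ultimately show ?thesis by (simp add: power2_eq_square abs_mult_self_eq) (smt (verit) zero_le_square)
  qed
  have pos: "(y - z)\<^sup>2 + t\<^sup>2 > 0" using t by (simp add: add_nonneg_pos)
  have "t / ((y - z)\<^sup>2 + t\<^sup>2) \<le> 1 / T"
    using key pos T by (simp add: divide_simps mult.commute)
  then have "(1/pi) * (t / ((y - z)\<^sup>2 + t\<^sup>2)) \<le> (1/pi) * (1 / T)"
    by (intro mult_left_mono) auto
  then show ?thesis unfolding poisson_kernel_def by simp
qed

lemma int_bound:
  fixes \<phi> G :: "real \<Rightarrow> real"
  assumes t: "t>0" and A: "A \<ge> 0" and B: "B \<ge> 0"
    and phim[measurable]: "\<phi> \<in> borel_measurable borel" and Gm[measurable]: "G \<in> borel_measurable borel"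
    and G0: "\<And>z. G z \<ge> 0" and GI: "(\<integral>\<^sup>+z. ennreal (G z) \<partial>lborel) = ennreal I" and I0: "I \<ge> 0"
    and le: "\<And>z. \<phi> z \<le> poisson_kernel (y-z) t * A + B * G z"
  shows "(\<integral>\<^sup>+z. ennreal (\<phi> z) \<partial>lborel) \<le> ennreal (A + B*I)"
proof -
  have "(\<integral>\<^sup>+z. ennreal (\<phi> z) \<partial>lborel)
     \<le> (\<integral>\<^sup>+z. ennreal (poisson_kernel (y-z) t) * ennreal A + ennreal B * ennreal (G z) \<partial>lborel)"
  proof (intro nn_integral_mono)
    fix z
    have "ennreal (\<phi> z) \<le> ennreal (poisson_kernel (y-z) t * A + B * G z)"
      using le by (rule ennreal_leI)
    also have "\<dots> = ennreal (poisson_kernel (y-z) t) * ennreal A + ennreal B * ennreal (G z)"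
      using P_nonneg[of t "y-z"] t A B G0[of z]
      by (simp add: ennreal_plus ennreal_mult)
    finally show "ennreal (\<phi> z) \<le> \<dots>" .
  qed
  also have "\<dots> = (\<integral>\<^sup>+z. ennreal (poisson_kernel (y-z) t) \<partial>lborel) * ennreal A + ennreal B * (\<integral>\<^sup>+z. ennreal (G z) \<partial>lborel)"
    by (subst nn_integral_add) (auto simp: nn_integral_multc nn_integral_cmult)
  also have "\<dots> = ennreal (A + B*I)"
    using A B I0 by (auto simp: P_int[OF t] GI ennreal_plus ennreal_mult)
  finally show ?thesis .
qed

lemma shift_D:
  fixes y h t :: real
  assumes [measurable]: "u0 \<in> borel_measurable borel" and t: "t > 0"
  defines "D \<equiv> (\<integral>\<^sup>+z. ennreal (poisson_kernel (y - z) t * \<bar>\<bar>u0 (z + h)\<bar> - \<bar>u0 z\<bar>\<bar>) \<partial>lborel)"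
  shows "poisson_conv_abs u0 t (y + h) \<le> poisson_conv_abs u0 t y + D"
    and "poisson_conv_abs u0 t y \<le> poisson_conv_abs u0 t (y + h) + D"
proof -
  have P0: "\<And>z. poisson_kernel (y - z) t \<ge> 0" using P_nonneg t by auto
  show "poisson_conv_abs u0 t (y + h) \<le> poisson_conv_abs u0 t y + D"
    apply (subst conv_shift[OF assms(1)])
    apply (unfold D_def poisson_conv_abs_def)
    apply (subst nn_integral_add[symmetric], measurable)
    apply (intro nn_integral_mono)
    apply (subst ennreal_plus[symmetric])
    using P0 apply (auto intro!: ennreal_leI simp: distrib_left[symmetric] intro!: mult_left_mono)
    done
  show "poisson_conv_abs u0 t y \<le> poisson_conv_abs u0 t (y + h) + D"
    apply (subst conv_shift[OF assms(1)])
    apply (unfold D_def poisson_conv_abs_def)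
    apply (subst nn_integral_add[symmetric], measurable)
    apply (intro nn_integral_mono)
    apply (subst ennreal_plus[symmetric])
    using P0 apply (auto intro!: ennreal_leI simp: distrib_left[symmetric] intro!: mult_left_mono)
    done
qed

lemma nt_shift:
  assumes "\<And>t y. t > 0 \<Longrightarrow> \<bar>y - x\<bar> \<le> \<alpha> * t \<Longrightarrow>
      poisson_conv_abs u0 t (y + h) \<le> poisson_conv_abs u0 t y + \<eta> \<and> poisson_conv_abs u0 t y \<le> poisson_conv_abs u0 t (y + h) + \<eta>"
  shows "nontang_max \<alpha> u0 (x + h) \<le> nontang_max \<alpha> u0 x + \<eta>"
    and "nontang_max \<alpha> u0 x \<le> nontang_max \<alpha> u0 (x + h) + \<eta>"
proof -
  show "nontang_max \<alpha> u0 (x + h) \<le> nontang_max \<alpha> u0 x + \<eta>"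
    unfolding nontang_max_def
  proof (rule SUP_least, clarify)
    fix t y assume t: "t > 0" and y: "\<bar>y - (x + h)\<bar> \<le> \<alpha> * t"
    have c: "\<bar>(y - h) - x\<bar> \<le> \<alpha> * t" using y by (simp add: algebra_simps)
    have "poisson_conv_abs u0 t y = poisson_conv_abs u0 t ((y - h) + h)" by simp
    also have "\<dots> \<le> poisson_conv_abs u0 t (y - h) + \<eta>" using assms[OF t c] by blast
    also have "\<dots> \<le> (SUP (t, y) \<in> {(t, y). t > 0 \<and> \<bar>y - x\<bar> \<le> \<alpha> * t}. poisson_conv_abs u0 t y) + \<eta>"
      by (intro add_right_mono SUP_upper2[of "(t, y - h)"]) (use t c in auto)
    finally show "poisson_conv_abs u0 t y \<le> \<dots>" .
  qed
  show "nontang_max \<alpha> u0 x \<le> nontang_max \<alpha> u0 (x + h) + \<eta>"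
    unfolding nontang_max_def
  proof (rule SUP_least, clarify)
    fix t y assume t: "t > 0" and y: "\<bar>y - x\<bar> \<le> \<alpha> * t"
    have c: "\<bar>(y + h) - (x + h)\<bar> \<le> \<alpha> * t" using y by (simp add: algebra_simps)
    have "poisson_conv_abs u0 t y \<le> poisson_conv_abs u0 t (y + h) + \<eta>" using assms[OF t y] by blast
    also have "\<dots> \<le> (SUP (t, y) \<in> {(t, y). t > 0 \<and> \<bar>y - (x + h)\<bar> \<le> \<alpha> * t}. poisson_conv_abs u0 t y) + \<eta>"
      by (intro add_right_mono SUP_upper2[of "(t, y + h)"]) (use t c in auto)
    finally show "poisson_conv_abs u0 t y \<le> \<dots>" .
  qed
qed

lemma finite_diff:
  fixes a b :: ennreal
  assumes "a \<le> b + ennreal e" "b \<le> a + ennreal e" "a \<noteq> \<infinity>" "b \<noteq> \<infinity>" "e \<ge> 0"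
  shows "\<bar>enn2real a - enn2real b\<bar> \<le> e"
proof -
  obtain a' where a': "a = ennreal a'" "a' \<ge> 0" using assms(3) by (cases a) auto
  obtain b' where b': "b = ennreal b'" "b' \<ge> 0" using assms(4) by (cases b) auto
  have "a' \<le> b' + e" "b' \<le> a' + e" using assms(1,2) a' b' assms(5)
    by (auto simp: ennreal_plus[symmetric] simp del: ennreal_plus)
  then show ?thesis using a' b' by auto
qed

lemma eps_trick:
  fixes a e p :: real
  assumes e: "e > 0" and p: "p \<ge> 1" and a: "a \<ge> 0"
  shows "a \<le> e + e powr (1 - p) * a powr p"
proof (cases "a \<le> e")
  case True
  then show ?thesis by (simp add: add_increasing2)
next
  case False
  then have a0: "a > 0" using e by auto
  have "a = a powr p * a powr (1 - p)" using a0 by (simp add: powr_add[symmetric])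
  also have "\<dots> \<le> a powr p * e powr (1 - p)"
    using False e p by (intro mult_left_mono powr_mono2') auto
  finally show ?thesis using e by (simp add: mult.commute)
qed


lemma part2:
  fixes u0 :: "real \<Rightarrow> real"
  assumes a: "\<alpha> > 0" and bd: "bounded (range u0)" and lip: "L0-lipschitz_on UNIV u0"
  defines "U \<equiv> (\<lambda>x. enn2real (nontang_max \<alpha> u0 x))"
  shows "(\<forall>x. nontang_max \<alpha> u0 x \<noteq> \<infinity>) \<and> bounded (range U) \<and> (\<exists>L. L-lipschitz_on UNIV U) \<and> Lip U \<le> Lip u0"
proof -
  have meas[measurable]: "u0 \<in> borel_measurable borel"
    using borel_measurable_continuous_onI[OF lipschitz_on_continuous_on[OF lip]] .
  obtain M where M: "\<And>x. \<bar>u0 x\<bar> \<le> M" using bd unfolding bounded_iff by auto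
  have M0: "M \<ge> 0" using M[of 0] by linarith
  define S where "S = {\<bar>u0 x - u0 y\<bar> / \<bar>x - y\<bar> | x y. x \<noteq> y}"
  have "\<bar>u0 0 - u0 1\<bar> / \<bar>0 - 1\<bar> \<in> S" unfolding S_def by force
  then have S_ne: "S \<noteq> {}" by blast
  have S_bdd: "bdd_above S"
  proof (rule bdd_aboveI)
    fix s assume "s \<in> S"
    then obtain x y where s: "s = \<bar>u0 x - u0 y\<bar> / \<bar>x - y\<bar>" "x \<noteq> y" unfolding S_def by auto
    have "\<bar>u0 x - u0 y\<bar> \<le> L0 * \<bar>x - y\<bar>" using lipschitz_onD[OF lip, of x y] by (simp add: dist_real_def)
    then show "s \<le> L0" using s by (simp add: divide_le_eq)
  qed
  define L where "L = Lip u0"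
  have LS: "L = Sup S" unfolding L_def Lip_def S_def by simp
  have lipL: "\<bar>u0 x - u0 y\<bar> \<le> L * \<bar>x - y\<bar>" for x y
  proof (cases "x = y")
    case False
    have "\<bar>u0 x - u0 y\<bar> / \<bar>x - y\<bar> \<le> L" unfolding LS
      by (rule cSup_upper[OF _ S_bdd]) (use False in \<open>auto simp: S_def\<close>)
    then show ?thesis using False by (simp add: divide_le_eq)
  qed simp
  have L0: "L \<ge> 0" using lipL[of 0 1] by simp
  have convM: "poisson_conv_abs u0 t y \<le> ennreal M" if t: "t > 0" for t y
  proof -
    have "poisson_conv_abs u0 t y \<le> ennreal (M + 0 * 0)"
      unfolding poisson_conv_abs_def
      by (rule int_bound[OF t M0 order.refl, where G="\<lambda>_. 0"])
         (use M P_nonneg[of t] t in \<open>auto intro!: mult_left_mono\<close>)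
    then show ?thesis by simp
  qed
  have ntM: "nontang_max \<alpha> u0 x \<le> ennreal M" for x
    unfolding nontang_max_def by (rule SUP_least) (auto intro: convM)
  have fin: "\<forall>x. nontang_max \<alpha> u0 x \<noteq> \<infinity>"
    using neq_top_trans[OF ennreal_neq_top ntM] by simp
  have UM: "\<bar>U x\<bar> \<le> M" for x
    unfolding U_def using enn2real_leI[OF M0 ntM[of x]] by (simp add: enn2real_nonneg)
  have Ulip: "\<bar>U (x + h) - U x\<bar> \<le> L * \<bar>h\<bar>" for x h
  proof -
    have Dle: "(\<integral>\<^sup>+z. ennreal (poisson_kernel (y - z) t * \<bar>\<bar>u0 (z + h)\<bar> - \<bar>u0 z\<bar>\<bar>) \<partial>lborel) \<le> ennreal (L * \<bar>h\<bar> + 0 * 0)"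
      if t: "t > 0" for t y
    proof (rule int_bound[OF t _ order.refl, where G="\<lambda>_. 0"])
      fix z
      have "\<bar>\<bar>u0 (z + h)\<bar> - \<bar>u0 z\<bar>\<bar> \<le> L * \<bar>h\<bar>" using lipL[of "z+h" z] by simp
      then show "poisson_kernel (y - z) t * \<bar>\<bar>u0 (z + h)\<bar> - \<bar>u0 z\<bar>\<bar> \<le> poisson_kernel (y - z) t * (L * \<bar>h\<bar>) + 0 * 0"
        using P_nonneg[of t "y - z"] t by (simp add: mult_left_mono)
    qed (use L0 in auto)
    have both: "poisson_conv_abs u0 t (y + h) \<le> poisson_conv_abs u0 t y + ennreal (L * \<bar>h\<bar>) \<and>
            poisson_conv_abs u0 t y \<le> poisson_conv_abs u0 t (y + h) + ennreal (L * \<bar>h\<bar>)"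
      if t: "t > 0" for t y
      using shift_D[OF meas t, of y h] Dle[OF t, of y]
      by (auto intro: order.trans add_left_mono)
    have "nontang_max \<alpha> u0 (x + h) \<le> nontang_max \<alpha> u0 x + ennreal (L * \<bar>h\<bar>)"
         "nontang_max \<alpha> u0 x \<le> nontang_max \<alpha> u0 (x + h) + ennreal (L * \<bar>h\<bar>)"
      using nt_shift[of x \<alpha> u0 h "ennreal (L * \<bar>h\<bar>)"] both by blast+
    then show ?thesis unfolding U_def
      using finite_diff[OF _ _ fin[rule_format] fin[rule_format]] L0 by simp
  qed
  have lipU: "L-lipschitz_on UNIV U"
  proof (rule lipschitz_onI[OF _ L0])
    fix x y :: real
    show "dist (U x) (U y) \<le> L * dist x y"
      using Ulip[of y "x - y"] by (simp add: dist_real_def)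
  qed
  have "Lip U \<le> L"
    unfolding Lip_def
  proof (rule cSup_least)
    have "\<bar>U 0 - U 1\<bar> / \<bar>0 - 1\<bar> \<in> {\<bar>U x - U y\<bar> / \<bar>x - y\<bar> | x y. x \<noteq> (y::real)}" by force
    then show "{\<bar>U x - U y\<bar> / \<bar>x - y\<bar> | x y. x \<noteq> y} \<noteq> {}" by blast
  next
    fix s assume "s \<in> {\<bar>U x - U y\<bar> / \<bar>x - y\<bar> | x y. x \<noteq> y}"
    then obtain x y where s: "s = \<bar>U x - U y\<bar> / \<bar>x - y\<bar>" "x \<noteq> y" by auto
    have "\<bar>U x - U y\<bar> \<le> L * \<bar>x - y\<bar>" using Ulip[of y "x - y"] by simp
    then show "s \<le> L" using s by (simp add: divide_le_eq)
  qed
  moreover have "bounded (range U)" unfolding bounded_iff using UM by auto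
  ultimately show ?thesis using fin lipU L_def by auto
qed


lemma outside_bound:
  fixes u0 :: "real \<Rightarrow> real"
  assumes t: "t > 0" and T: "T > 0" and a: "\<alpha> \<ge> 0" and y: "\<bar>y - x0\<bar> \<le> \<alpha> * t"
    and z: "\<not> \<bar>z - x0\<bar> \<le> (\<alpha> + 1) * T" and K: "K \<ge> 0"
    and fz: "F \<le> E + K * Gz" and G0: "Gz \<ge> 0"
  shows "poisson_kernel (y - z) t * F \<le> poisson_kernel (y - z) t * E + 1 / (pi * T) * K * Gz"
proof -
  have P0: "poisson_kernel (y - z) t \<ge> 0" using P_nonneg t by auto
  have Pc: "poisson_kernel (y - z) t \<le> 1 / (pi * T)" using P_far[OF t T a y z] .
  have "poisson_kernel (y - z) t * F \<le> poisson_kernel (y - z) t * (E + K * Gz)"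
    using fz P0 by (intro mult_left_mono) auto
  also have "\<dots> = poisson_kernel (y - z) t * E + poisson_kernel (y - z) t * (K * Gz)"
    by (simp add: distrib_left)
  also have "\<dots> \<le> poisson_kernel (y - z) t * E + 1 / (pi * T) * (K * Gz)"
    using Pc G0 K by (intro add_left_mono mult_right_mono) auto
  finally show ?thesis by (simp add: mult.assoc)
qed

lemma part1:
  fixes u0 :: "real \<Rightarrow> real"
  assumes a: "\<alpha> > 0" and cont: "continuous_on UNIV u0" and p: "1 \<le> p"
    and int: "integrable lborel (\<lambda>x. \<bar>u0 x\<bar> powr p)"
  defines "U \<equiv> (\<lambda>x. enn2real (nontang_max \<alpha> u0 x))"
  shows "(\<forall>x. nontang_max \<alpha> u0 x \<noteq> \<infinity>) \<and> continuous_on UNIV U"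
proof -
  have meas[measurable]: "u0 \<in> borel_measurable borel"
    using borel_measurable_continuous_onI[OF cont] .
  define g where "g = (\<lambda>x. \<bar>u0 x\<bar> powr p)"
  have gm[measurable]: "g \<in> borel_measurable borel" unfolding g_def by measurable
  have g0: "g z \<ge> 0" for z unfolding g_def by simp
  define I where "I = integral\<^sup>L lborel g"
  have I0: "I \<ge> 0" unfolding I_def by (rule integral_nonneg_AE) (simp add: g0)
  have gI: "(\<integral>\<^sup>+z. ennreal (g z) \<partial>lborel) = ennreal I"
    unfolding I_def using int by (subst nn_integral_eq_integral) (auto simp: g_def)
  have gIh: "(\<integral>\<^sup>+z. ennreal (g (z + h)) \<partial>lborel) = ennreal I" for h
    using shift_int[of "\<lambda>z. ennreal (g z)" h] gI by simp
  have g2I: "(\<integral>\<^sup>+z. ennreal (g (z + h) + g z) \<partial>lborel) = ennreal (2 * I)" for h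
  proof -
    have "(\<integral>\<^sup>+z. ennreal (g (z + h) + g z) \<partial>lborel) = (\<integral>\<^sup>+z. ennreal (g (z + h)) + ennreal (g z) \<partial>lborel)"
      using g0 by (simp add: ennreal_plus)
    also have "\<dots> = ennreal I + ennreal I"
      by (subst nn_integral_add) (auto simp: gIh gI)
    also have "\<dots> = ennreal (2 * I)" using I0 by (simp add: ennreal_plus[symmetric] del: ennreal_plus)
    finally show ?thesis .
  qed
  have eps: "\<bar>u0 z\<bar> \<le> e + e powr (1 - p) * g z" if "e > 0" for e z
    unfolding g_def using eps_trick[OF that p, of "\<bar>u0 z\<bar>"] by simp
  have fin: "nontang_max \<alpha> u0 x0 \<noteq> \<infinity>" for x0
  proof -
    have "compact (u0 ` cball x0 (\<alpha> + 1))"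
      by (rule compact_continuous_image[OF continuous_on_subset[OF cont] compact_cball]) auto
    then have "bounded (u0 ` cball x0 (\<alpha> + 1))" by (rule compact_imp_bounded)
    then obtain M where M0: "\<forall>x\<in>u0 ` cball x0 (\<alpha> + 1). norm x \<le> M"
      unfolding bounded_iff by blast
    have M: "\<And>z. z \<in> cball x0 (\<alpha> + 1) \<Longrightarrow> \<bar>u0 z\<bar> \<le> M" using M0 by auto
    define M' where "M' = max M 0"
    have cb: "poisson_conv_abs u0 t y \<le> ennreal ((M' + 1) + 1 / (pi * 1) * 1 powr (1 - p) * I)"
      if t: "t > 0" and y: "\<bar>y - x0\<bar> \<le> \<alpha> * t" for t y
      unfolding poisson_conv_abs_def
    proof (rule int_bound[OF t _ _ _ gm g0 gI I0])
      fix z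
      show "poisson_kernel (y - z) t * \<bar>u0 z\<bar> \<le> poisson_kernel (y - z) t * (M' + 1) + 1 / (pi * 1) * 1 powr (1 - p) * g z"
      proof (cases "\<bar>z - x0\<bar> \<le> (\<alpha> + 1) * 1")
        case True
        then have "\<bar>u0 z\<bar> \<le> M' + 1" using M[of z] by (simp add: M'_def dist_real_def abs_minus_commute)
        then have "poisson_kernel (y - z) t * \<bar>u0 z\<bar> \<le> poisson_kernel (y - z) t * (M' + 1)"
          using P_nonneg[of t "y - z"] t by (intro mult_left_mono) auto
        then show ?thesis using g0[of z] by (simp add: add_increasing2)
      next
        case False
        have "poisson_kernel (y - z) t * \<bar>u0 z\<bar> \<le> poisson_kernel (y - z) t * 1 + 1 / (pi * 1) * 1 powr (1 - p) * g z"
          by (rule outside_bound[OF t _ _ y False _ _ g0]) (use a eps[of 1 z] in auto)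
        moreover have "poisson_kernel (y - z) t * 1 \<le> poisson_kernel (y - z) t * (M' + 1)"
          using P_nonneg[of t "y - z"] t by (intro mult_left_mono) (auto simp: M'_def)
        ultimately show ?thesis by linarith
      qed
    qed (auto simp: M'_def)
    have "nontang_max \<alpha> u0 x0 \<le> ennreal ((M' + 1) + 1 / (pi * 1) * 1 powr (1 - p) * I)"
      unfolding nontang_max_def
    proof (rule SUP_least, clarify)
      fix t y assume "t > 0" "\<bar>y - x0\<bar> \<le> \<alpha> * t"
      then show "poisson_conv_abs u0 t y \<le> ennreal ((M' + 1) + 1 / (pi * 1) * 1 powr (1 - p) * I)" by (rule cb)
    qed
    then show ?thesis using neq_top_trans[OF ennreal_neq_top] by simp
  qed
  have "continuous_on UNIV U"
    unfolding continuous_on_iff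
  proof (intro ballI allI impI)
    fix x0 :: real and \<epsilon> :: real
    assume "x0 \<in> UNIV" and \<epsilon>: "\<epsilon> > 0"
    define e where "e = \<epsilon> / 8"
    have e: "e > 0" using \<epsilon> by (simp add: e_def)
    define K where "K = e powr (1 - p)"
    have K0: "K \<ge> 0" unfolding K_def by simp
    define T where "T = (2 * K * I + 1) / (pi * e)"
    have T: "T > 0" unfolding T_def using K0 I0 e by (auto intro!: divide_pos_pos add_nonneg_pos)
    have cKI: "1 / (pi * T) * K * (2 * I) \<le> e"
    proof -
      have pos: "2 * K * I + 1 > 0" using K0 I0 by (simp add: add_nonneg_pos)
      have q: "1 / (pi * T) = e / (2 * K * I + 1)" unfolding T_def using e pos by simp
      have "1 / (pi * T) * K * (2 * I) = e * ((2 * K * I) / (2 * K * I + 1))"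
        unfolding q by (simp add: mult_ac)
      also have "\<dots> \<le> e * 1"
        using e pos by (intro mult_left_mono) (auto simp: divide_le_eq)
      finally show ?thesis by simp
    qed
    define R where "R = (\<alpha> + 1) * T"
    have ca: "continuous_on UNIV (\<lambda>z. \<bar>u0 z\<bar>)" using cont by (intro continuous_intros)
    have "uniformly_continuous_on (cball x0 (R + 1)) (\<lambda>z. \<bar>u0 z\<bar>)"
      by (intro compact_uniformly_continuous continuous_on_subset[OF ca]) auto
    then obtain d where d: "d > 0"
      and dd: "\<And>z z'. z \<in> cball x0 (R + 1) \<Longrightarrow> z' \<in> cball x0 (R + 1) \<Longrightarrow> dist z' z < d \<Longrightarrow> dist \<bar>u0 z'\<bar> \<bar>u0 z\<bar> < e"
      unfolding uniformly_continuous_on_def using e by metis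
    show "\<exists>\<delta>>0. \<forall>x'\<in>UNIV. dist x' x0 < \<delta> \<longrightarrow> dist (U x') (U x0) < \<epsilon>"
    proof (intro exI[of _ "min d 1"] conjI ballI impI)
      show "min d 1 > 0" using d by simp
      fix x assume "x \<in> UNIV" and xd: "dist x x0 < min d 1"
      define h where "h = x - x0"
      have h: "\<bar>h\<bar> < d" "\<bar>h\<bar> < 1" using xd by (auto simp: h_def dist_real_def)
      have Dle: "(\<integral>\<^sup>+z. ennreal (poisson_kernel (y - z) t * \<bar>\<bar>u0 (z + h)\<bar> - \<bar>u0 z\<bar>\<bar>) \<partial>lborel)
                  \<le> ennreal (3 * e + 1 / (pi * T) * K * (2 * I))"
        if t: "t > 0" and y: "\<bar>y - x0\<bar> \<le> \<alpha> * t" for t y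
      proof (rule int_bound[OF t _ _ _ _ _ g2I])
        fix z
        have P0: "poisson_kernel (y - z) t \<ge> 0" using P_nonneg t by auto
        show "poisson_kernel (y - z) t * \<bar>\<bar>u0 (z + h)\<bar> - \<bar>u0 z\<bar>\<bar> \<le> poisson_kernel (y - z) t * (3 * e) + 1 / (pi * T) * K * (g (z + h) + g z)"
        proof (cases "\<bar>z - x0\<bar> \<le> R")
          case True
          have "z \<in> cball x0 (R + 1)" "z + h \<in> cball x0 (R + 1)"
            using True h by (auto simp: dist_real_def)
          then have "\<bar>\<bar>u0 (z + h)\<bar> - \<bar>u0 z\<bar>\<bar> < e"
            using dd[of z "z + h"] h by (auto simp: dist_real_def)
          then have "poisson_kernel (y - z) t * \<bar>\<bar>u0 (z + h)\<bar> - \<bar>u0 z\<bar>\<bar> \<le> poisson_kernel (y - z) t * (3 * e)"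
            using P0 e by (intro mult_left_mono) auto
          moreover have "0 \<le> 1 / (pi * T) * K * (g (z + h) + g z)"
            using T K0 g0 by (intro mult_nonneg_nonneg add_nonneg_nonneg) auto
          ultimately show ?thesis by linarith
        next
          case False
          have "\<bar>\<bar>u0 (z + h)\<bar> - \<bar>u0 z\<bar>\<bar> \<le> \<bar>u0 (z + h)\<bar> + \<bar>u0 z\<bar>" by simp
          also have "\<dots> \<le> 2 * e + K * (g (z + h) + g z)"
            using eps[OF e, of "z + h"] eps[OF e, of z] unfolding K_def by (simp add: distrib_left)
          finally have "poisson_kernel (y - z) t * \<bar>\<bar>u0 (z + h)\<bar> - \<bar>u0 z\<bar>\<bar> \<le> poisson_kernel (y - z) t * (2 * e) + 1 / (pi * T) * K * (g (z + h) + g z)"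
            by (intro outside_bound[OF t T _ y False[unfolded R_def] K0]) (use a e g0 add_nonneg_nonneg in auto)
          moreover have "poisson_kernel (y - z) t * (2 * e) \<le> poisson_kernel (y - z) t * (3 * e)"
            using P0 e by (intro mult_left_mono) auto
          ultimately show ?thesis by linarith
        qed
      qed (use e T K0 g0 I0 in \<open>auto intro!: add_nonneg_nonneg\<close>)
      have both: "poisson_conv_abs u0 t (y + h) \<le> poisson_conv_abs u0 t y + ennreal (4 * e) \<and>
            poisson_conv_abs u0 t y \<le> poisson_conv_abs u0 t (y + h) + ennreal (4 * e)"
        if t: "t > 0" and y: "\<bar>y - x0\<bar> \<le> \<alpha> * t" for t y
      proof -
        have "ennreal (3 * e + 1 / (pi * T) * K * (2 * I)) \<le> ennreal (4 * e)"
          using cKI by (intro ennreal_leI) auto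
        then show ?thesis
          using shift_D[OF meas t, of y h] Dle[OF t y]
          by (auto intro: order.trans add_left_mono)
      qed
      have "nontang_max \<alpha> u0 (x0 + h) \<le> nontang_max \<alpha> u0 x0 + ennreal (4 * e)"
           "nontang_max \<alpha> u0 x0 \<le> nontang_max \<alpha> u0 (x0 + h) + ennreal (4 * e)"
        using nt_shift[of x0 \<alpha> u0 h "ennreal (4 * e)"] both by blast+
      then have "\<bar>U (x0 + h) - U x0\<bar> \<le> 4 * e"
        unfolding U_def using finite_diff[OF _ _ fin fin] e by simp
      then show "dist (U x) (U x0) < \<epsilon>"
        using e \<epsilon> by (simp add: h_def dist_real_def e_def)
    qed
  qed
  then show ?thesis using fin by auto
qed

theorem lemma20:
  fixes \<alpha> :: real and u0 :: "real \<Rightarrow> real" and p :: real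
  assumes "\<alpha> > 0"
  shows "((continuous_on UNIV u0 \<and> 1 \<le> p \<and> integrable lborel (\<lambda>x. \<bar>u0 x\<bar> powr p))
           \<longrightarrow> (\<forall>x. nontang_max \<alpha> u0 x \<noteq> \<infinity>)
               \<and> continuous_on UNIV (\<lambda>x. enn2real (nontang_max \<alpha> u0 x)))
       \<and> ((bounded (range u0) \<and> (\<exists>L. L-lipschitz_on UNIV u0))
           \<longrightarrow> (\<forall>x. nontang_max \<alpha> u0 x \<noteq> \<infinity>)
               \<and> bounded (range (\<lambda>x. enn2real (nontang_max \<alpha> u0 x)))
               \<and> (\<exists>L. L-lipschitz_on UNIV (\<lambda>x. enn2real (nontang_max \<alpha> u0 x)))
               \<and> Lip (\<lambda>x. enn2real (nontang_max \<alpha> u0 x)) \<le> Lip u0)"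
  using part1[OF assms, of u0 p] part2[OF assms, of u0] by blast

end
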